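(* Let $\varphi:S^1\to S^1$ be an orientation preserving circle homeomorphism with rational rotation number $\varrho=p/q$ ($p,q$ relatively prime, $q\ge1$) which is conjugate to the rotation $\mathcal{R}_{\varrho}$, i.e. $\varphi=h^{-1}\circ\mathcal{R}_{\varrho}\circ h$ for some orientation preserving circle homeomorphism $h$. Let $\Phi$ be a lift of $\varphi$, let $x_0\in\mathbb{R}$, and let $\Gamma=\Gamma(u)$ be the curlicue generated by $u_n=\Phi^n(x_0)$. Then $\Gamma$ is not superficial (for every choice of $x_0$), and the following conditions are equivalent: (1) $\frac{1}{q}\sum_{k=0}^{q-1}\exp(2\pi\imath\Phi^k(x_0))=0$; (2) $\Gamma$ is bounded; (3) $\Gamma$ is an equilateral $q$-polygon (i.e. $z_q=z_0$, so $\Gamma$ is the closed polygon $z_0z_1\cdots z_{q-1}z_0$ with $q$ sides of length $1$, traversed repeatedly). Moreover, $\Gamma$ is a regular polygon for every $x_0\in\mathbb{R}$ if and only if $\varphi=\mathcal{R}_{\varrho}$. In this case, if $x_0\in\mathbb{Z}$, the points $z_0,z_1,z_q,z_{q+1},z_{2q},z_{2q+1},\dots,z_{nq},z_{nq+1},\dots$ all lie on the line $\mathrm{Im}(z)=0$.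
   Context: Identify $S^1=\mathbb{R}/\mathbb{Z}$ via $x\mapsto\exp(2\pi\imath x)$; a lift of $\varphi$ is a homeomorphism $\Phi:\mathbb{R}\to\mathbb{R}$ with $\Phi(x+1)=\Phi(x)+1$ projecting to $\varphi$. $\mathcal{R}_{\varrho}$ is the rotation $x\mapsto x+\varrho \bmod 1$. For a real sequence $u=(u_n)_{n\ge0}$, the curlicue $\Gamma(u)$ is the piecewise linear curve in $\mathbb{C}$ passing consecutively through $z_0=0$ and $z_n=\sum_{k=0}^{n-1}\exp(2\pi\imath u_k)$, $n\ge1$. A regular polygon means an equilateral and equiangular closed polygon, possibly self-intersecting (a regular convex or star polygon). For $t>0$, $\Gamma_t$ is the initial part of $\Gamma$ of length $t$ and $\Gamma^{\varepsilon}=\{y:\exists x\in\Gamma,|x-y|<\varepsilon\}$. An unbounded curve is superficial if $\lim_{t\to\infty}t/\mathrm{Diam}\,\Gamma_t=\infty$; a bounded curve is superficial if $\lim_{\varepsilon\to0}\mathrm{Area}(\Gamma^{\varepsilon})/\varepsilon=\infty$ (Area = 2-dimensional Lebesgue measure). *)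

theory Defs
  imports "HOL-Analysis.Analysis"
begin

text \<open>The circle S^1 = R/Z is realised as the unit circle in C, via x maps to exp(2 pi i x) = cis (2 pi x).\<close>

abbreviation S1 :: "complex set" where "S1 \<equiv> sphere 0 1"

definition circle_homeo :: "(complex \<Rightarrow> complex) \<Rightarrow> bool" where
  "circle_homeo f \<longleftrightarrow> (\<exists>g. homeomorphism S1 S1 f g)"

definition is_lift :: "(real \<Rightarrow> real) \<Rightarrow> (complex \<Rightarrow> complex) \<Rightarrow> bool" where
  "is_lift F f \<longleftrightarrow> (\<exists>G. homeomorphism UNIV UNIV F G)
     \<and> (\<forall>x. F (x + 1) = F x + 1)
     \<and> (\<forall>x. f (cis (2 * pi * x)) = cis (2 * pi * F x))"

definition orient_pres :: "(complex \<Rightarrow> complex) \<Rightarrow> bool" where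
  "orient_pres f \<longleftrightarrow> (\<exists>F. is_lift F f \<and> strict_mono F)"

definition rot :: "real \<Rightarrow> complex \<Rightarrow> complex" where
  "rot \<rho> z = cis (2 * pi * \<rho>) * z"

definition lift_rot :: "(real \<Rightarrow> real) \<Rightarrow> real" where
  "lift_rot F = lim (\<lambda>n. (F ^^ n) 0 / real n)"

definition rotation_number :: "(real \<Rightarrow> real) \<Rightarrow> real" where
  "rotation_number F = frac (lift_rot F)"

definition zpt :: "(nat \<Rightarrow> real) \<Rightarrow> nat \<Rightarrow> complex" where
  "zpt u n = (\<Sum>k<n. cis (2 * pi * u k))"

definition curl_param :: "(nat \<Rightarrow> real) \<Rightarrow> real \<Rightarrow> complex" where
  "curl_param u s = zpt u (nat \<lfloor>s\<rfloor>)
      + complex_of_real (s - of_int \<lfloor>s\<rfloor>) * cis (2 * pi * u (nat \<lfloor>s\<rfloor>))"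

definition curlicue :: "(nat \<Rightarrow> real) \<Rightarrow> complex set" where
  "curlicue u = curl_param u ` {0..}"

definition curl_init :: "(nat \<Rightarrow> real) \<Rightarrow> real \<Rightarrow> complex set" where
  "curl_init u t = curl_param u ` {0..t}"

definition nbhd :: "complex set \<Rightarrow> real \<Rightarrow> complex set" where
  "nbhd A \<epsilon> = {y. \<exists>x\<in>A. cmod (x - y) < \<epsilon>}"

definition superficial :: "(nat \<Rightarrow> real) \<Rightarrow> bool" where
  "superficial u \<longleftrightarrow>
     (if bounded (curlicue u)
      then filterlim (\<lambda>\<epsilon>. measure lborel (nbhd (curlicue u) \<epsilon>) / \<epsilon>) at_top (at_right 0)
      else filterlim (\<lambda>t. t / diameter (curl_init u t)) at_top at_top)"

text \<open>Regular (convex or star) polygon: the curve closes up (z_N = z_0 for some N >= 1)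
  and the turning angle between consecutive unit edges is constant.\<close>
definition regular_polygon :: "(nat \<Rightarrow> real) \<Rightarrow> bool" where
  "regular_polygon u \<longleftrightarrow>
     (\<exists>N\<ge>1. zpt u N = zpt u 0) \<and> (\<exists>\<theta>. \<forall>n. u (Suc n) - u n - \<theta> \<in> \<int>)"

definition orbit :: "(real \<Rightarrow> real) \<Rightarrow> real \<Rightarrow> nat \<Rightarrow> real" where
  "orbit F x0 n = (F ^^ n) x0"

end

theory Submission
  imports Defs
begin

lemma cis_eq_Ints: assumes "cis (2*pi*a) = cis (2*pi*b)" shows "a - b \<in> \<int>"
proof -
  have "cis (2*pi*(a-b)) = 1" using assms
    by (metis cis_divide cis_neq_zero divide_self right_diff_distrib)
  hence "cos (2*pi*(a-b)) = 1" by (metis complex.sel(1) cis.sel(1) one_complex.sel(1))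
  then obtain n::int where "2*pi*(a-b) = real_of_int n*2*pi" using cos_one_2pi_int by auto
  hence "a - b = n" by simp
  thus ?thesis by simp
qed

lemma cont_Ints_const:
  fixes f :: "real \<Rightarrow> real"
  assumes "continuous_on UNIV f" "\<And>x. f x \<in> \<int>"
  shows "f x = f y"
proof -
  have "f constant_on UNIV"
  proof (rule continuous_discrete_range_constant)
    show "connected (UNIV::real set)" by simp
    show "continuous_on UNIV f" by fact
    fix x :: real assume "x \<in> UNIV"
    show "\<exists>e>0. \<forall>y. y \<in> UNIV \<and> f y \<noteq> f x \<longrightarrow> e \<le> norm (f y - f x)"
    proof (intro exI[of _ 1] conjI allI impI)
      fix y assume "y \<in> UNIV \<and> f y \<noteq> f x"
      then obtain a b where "f y = of_int a" "f x = of_int b" "a \<noteq> b"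
        using assms(2) by (metis Ints_cases)
      hence "1 \<le> \<bar>of_int a - of_int b :: real\<bar>" 
      proof -
        have "1 \<le> \<bar>a - b\<bar>" using \<open>a \<noteq> b\<close> by linarith
        hence "(1::real) \<le> of_int \<bar>a - b\<bar>" by linarith
        thus ?thesis by simp
      qed
      thus "1 \<le> norm (f y - f x)" using \<open>f y = _\<close> \<open>f x = _\<close> by simp
    qed simp
  qed
  thus ?thesis by (simp add: constant_on_def) (metis)
qed

lemma funpow_cont: "continuous_on UNIV (F::real\<Rightarrow>real) \<Longrightarrow> continuous_on UNIV (F ^^ n)"
  by (induction n) (auto intro: continuous_on_compose2[where t=UNIV] simp: continuous_on_id)

lemma zpt_shift:
  assumes per: "\<And>k. cis (2*pi*u (k+q)) = cis (2*pi*u k)"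
  shows "zpt u (k+q) = zpt u k + zpt u q"
proof (induction k)
  case 0 thus ?case by (simp add: zpt_def)
next
  case (Suc k)
  have "zpt u (Suc k + q) = zpt u (k+q) + cis (2*pi*u (k+q))" by (simp add: zpt_def)
  also have "\<dots> = zpt u (Suc k) + zpt u q" using Suc per[of k] by (simp add: zpt_def)
  finally show ?case .
qed

lemma zpt_mult:
  assumes per: "\<And>k. cis (2*pi*u (k+q)) = cis (2*pi*u k)"
  shows "zpt u (n*q + j) = of_nat n * zpt u q + zpt u j"
proof (induction n)
  case 0 thus ?case by simp
next
  case (Suc n)
  have "zpt u (Suc n*q + j) = zpt u ((n*q+j) + q)" by (simp add: algebra_simps)
  also have "\<dots> = zpt u (n*q+j) + zpt u q" using zpt_shift[of u q] per by blast
  finally show ?case using Suc by (simp add: algebra_simps)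
qed

lemma zpt_norm: "norm (zpt u n) \<le> n"
  unfolding zpt_def by (rule order_trans[OF norm_sum]) simp

lemma curl_norm: assumes "s \<ge> 0" shows "norm (curl_param u s) \<le> s + 1"
proof -
  have "norm (zpt u (nat \<lfloor>s\<rfloor>)) \<le> real (nat \<lfloor>s\<rfloor>)" by (rule zpt_norm)
  also have "\<dots> \<le> s" using assms by linarith
  finally have 1: "norm (zpt u (nat \<lfloor>s\<rfloor>)) \<le> s" .
  have "norm (complex_of_real (s - of_int \<lfloor>s\<rfloor>) * cis (2 * pi * u (nat \<lfloor>s\<rfloor>))) \<le> 1"
  proof -
    have "norm (complex_of_real (s - of_int \<lfloor>s\<rfloor>)) \<le> 1" by (simp only: norm_of_real) linarith
    thus ?thesis by (simp add: norm_mult del: of_real_diff)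
  qed
  moreover have "norm (curl_param u s) \<le> norm (zpt u (nat \<lfloor>s\<rfloor>)) + norm (complex_of_real (s - of_int \<lfloor>s\<rfloor>) * cis (2 * pi * u (nat \<lfloor>s\<rfloor>)))"
    unfolding curl_param_def by (rule norm_triangle_ineq)
  ultimately show ?thesis using 1 by linarith
qed

lemma curl_param_nat: "curl_param u (real n) = zpt u n"
  by (simp add: curl_param_def)

lemma unbounded_case:
  assumes per: "\<And>k. cis (2*pi*u (k+q)) = cis (2*pi*u k)" and q1: "q \<ge> 1"
    and Z: "zpt u q \<noteq> 0"
  shows "\<not> bounded (curlicue u) \<and> \<not> filterlim (\<lambda>t. t / diameter (curl_init u t)) at_top at_top"
proof
  define Z where "Z = zpt u q"
  have Zpos: "norm Z > 0" using Z Z_def by simp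
  have pt: "curl_param u (real (n*q)) = of_nat n * Z" for n
    using zpt_mult[of u q n 0] per curl_param_nat[of u "n*q"] by (simp add: Z_def zpt_def)
  show "\<not> bounded (curlicue u)"
  proof
    assume "bounded (curlicue u)"
    then obtain B where B: "\<And>x. x \<in> curlicue u \<Longrightarrow> norm x \<le> B" by (meson bounded_iff)
    obtain n::nat where n: "n > B / norm Z" using reals_Archimedean2 by blast
    have "of_nat n * Z \<in> curlicue u" unfolding curlicue_def using pt[of n, symmetric]
      by (metis atLeast_iff imageI of_nat_0_le_iff)
    hence "real n * norm Z \<le> B" using B by (metis norm_mult norm_of_nat)
    thus False using n Zpos by (simp add: field_simps)
  qed
  show "\<not> filterlim (\<lambda>t. t / diameter (curl_init u t)) at_top at_top"
  proof
    assume "filterlim (\<lambda>t. t / diameter (curl_init u t)) at_top at_top"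
    hence "eventually (\<lambda>t::real. t / diameter (curl_init u t) \<ge> 2*q/norm Z) at_top"
      by (simp add: filterlim_at_top)
    moreover have "eventually (\<lambda>t::real. t \<ge> 2*q) at_top" by (rule eventually_ge_at_top)
    ultimately obtain t :: real where t1: "t / diameter (curl_init u t) \<ge> 2*q/norm Z" and t2: "t \<ge> 2*q"
      using eventually_happens'[OF trivial_limit_at_top_linorder eventually_conj] by blast
    define n where "n = nat \<lfloor>t / q\<rfloor>"
    have qp: "real q > 0" using q1 by simp
    have tq: "t/q \<ge> 2" using t2 qp by (simp add: field_simps)
    have "real n \<le> t/q" unfolding n_def using tq of_nat_nat[of "\<lfloor>t/q\<rfloor>"] by linarith
    hence nq: "real (n*q) \<le> t" using qp by (simp add: le_divide_eq)
    have ngt: "real n > t / (2*q)"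
    proof -
      have "real n > t/q - 1" unfolding n_def using tq by linarith
      moreover have "t/q - 1 \<ge> t/(2*q)" using tq qp by (simp add: field_simps)
      ultimately show ?thesis by linarith
    qed
    have "t / (2*q) > 0" using t2 qp by simp
    hence npos: "real n > 0" using ngt by linarith
    have bd: "bounded (curl_init u t)"
      unfolding bounded_iff curl_init_def
    proof (intro exI ballI)
      fix x assume "x \<in> curl_param u ` {0..t}"
      then obtain s where "s \<in> {0..t}" "x = curl_param u s" by blast
      thus "norm x \<le> t + 1" using curl_norm[of s u] by auto
    qed
    have "0 \<in> curl_init u t" unfolding curl_init_def using t2
      using curl_param_nat[of u 0] qp by (force simp: zpt_def)
    moreover have "of_nat n * Z \<in> curl_init u t" unfolding curl_init_def using pt[of n, symmetric] nq
      by (metis atLeastAtMost_iff imageI of_nat_0_le_iff)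
    ultimately have "dist 0 (of_nat n * Z) \<le> diameter (curl_init u t)"
      using diameter_bounded_bound[OF bd] by blast
    hence dg: "real n * norm Z \<le> diameter (curl_init u t)" by (simp add: norm_mult)
    have dpos: "real n * norm Z > 0" using npos Zpos by simp
    have "t / diameter (curl_init u t) \<le> t / (real n * norm Z)"
      using dg dpos t2 by (intro divide_left_mono) auto
    also have "\<dots> < t / ((t/(2*q)) * norm Z)"
      using ngt Zpos t2 qp npos by (intro divide_strict_left_mono mult_strict_right_mono) (auto simp: field_simps)
    also have "\<dots> = 2*q / norm Z" using t2 qp Zpos by (simp add: field_simps)
    finally show False using t1 by linarith
  qed
qed

lemma per_mult: fixes u :: "nat \<Rightarrow> real" and q :: nat assumes per: "\<And>k. cis (2*pi*u (k+q)) = cis (2*pi*u k)"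
  shows "cis (2*pi*u (j + m*q)) = cis (2*pi*u j)"
proof (induction m)
  case (Suc m)
  have "j + Suc m * q = (j + m*q) + q" by simp
  thus ?case using per[of "j+m*q"] Suc by (simp only:)
qed simp

lemma curl_point_bounded:
  assumes per: "\<And>k. cis (2*pi*u (k+q)) = cis (2*pi*u k)" and q1: "q \<ge> 1"
    and Z: "zpt u q = 0" and s: "s \<ge> 0"
  shows "\<exists>j<q. \<exists>t. 0 \<le> t \<and> t \<le> 1 \<and> curl_param u s = zpt u j + of_real t * cis (2*pi*u j)"
proof -
  define n where "n = nat \<lfloor>s\<rfloor>"
  define j where "j = n mod q"
  define m where "m = n div q"
  have nj: "n = m*q + j" unfolding j_def m_def by simp
  have jq: "j < q" unfolding j_def using q1 by simp
  have 1: "zpt u n = zpt u j" using zpt_mult[of u q m j] per Z nj by simp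
  have 2: "cis (2*pi*u n) = cis (2*pi*u j)" using per_mult[of u q j m] per nj by (simp add: add.commute)
  have "curl_param u s = zpt u j + of_real (s - of_int \<lfloor>s\<rfloor>) * cis (2*pi*u j)"
    unfolding curl_param_def using 1 2 n_def by simp
  moreover have "0 \<le> s - of_int \<lfloor>s\<rfloor>" "s - of_int \<lfloor>s\<rfloor> \<le> 1" by linarith+
  ultimately show ?thesis using jq by blast
qed

lemma bounded_case:
  assumes per: "\<And>k. cis (2*pi*u (k+q)) = cis (2*pi*u k)" and q1: "q \<ge> 1"
    and Z: "zpt u q = 0"
  shows "bounded (curlicue u) \<and>
    \<not> filterlim (\<lambda>\<epsilon>. measure lborel (nbhd (curlicue u) \<epsilon>) / \<epsilon>) at_top (at_right 0)"
proof
  define w where "w j = cis (2*pi*u j)" for j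
  have pt: "\<exists>j<q. \<exists>t. 0 \<le> t \<and> t \<le> 1 \<and> x = zpt u j + of_real t * w j" if "x \<in> curlicue u" for x
    using that curl_point_bounded[OF per q1 Z] unfolding curlicue_def w_def by auto
  show "bounded (curlicue u)" unfolding bounded_iff
  proof (intro exI ballI)
    fix x assume "x \<in> curlicue u"
    then obtain j t where jt: "j < q" "0 \<le> t" "t \<le> 1" "x = zpt u j + of_real t * w j" using pt by blast
    have "norm x \<le> norm (zpt u j) + norm (of_real t * w j)" using jt(4) norm_triangle_ineq by simp
    also have "\<dots> \<le> real j + 1" using zpt_norm[of u j] jt by (simp add: norm_mult w_def)
    also have "\<dots> \<le> real q + 1" using jt by simp
    finally show "norm x \<le> real q + 1" .
  qed
  define K where "K = 12 * pi * real q"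
  have key: "measure lborel (nbhd (curlicue u) e) / e \<le> K" if e: "0 < e" "e < 1" for e
  proof -
    define N where "N = nat \<lceil>1/e\<rceil>"
    have "1/e > 0" using e by simp
    have N1: "real N \<ge> 1/e" unfolding N_def using of_nat_nat[of "\<lceil>1/e\<rceil>"] \<open>1/e > 0\<close> le_of_int_ceiling[of "1/e"] by linarith
    have Npos: "real N > 0" using N1 \<open>1/e > 0\<close> by linarith
    hence N2: "real N \<le> 1/e + 1" unfolding N_def using of_nat_nat[of "\<lceil>1/e\<rceil>"] by linarith
    define c where "c = (\<lambda>(j,i). zpt u j + of_real (real i / real N) * w j)"
    define I where "I = {..<q} \<times> {..N}"
    have finI: "finite I" unfolding I_def by simp
    have cardI: "card I = q * (N+1)" unfolding I_def by (simp add: card_cartesian_product)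
    have sub: "nbhd (curlicue u) e \<subseteq> (\<Union>a\<in>I. ball (c a) (2*e))"
    proof
      fix y assume "y \<in> nbhd (curlicue u) e"
      then obtain x where x: "x \<in> curlicue u" "norm (x - y) < e" unfolding nbhd_def by blast
      then obtain j t where jt: "j < q" "0 \<le> t" "t \<le> 1" "x = zpt u j + of_real t * w j" using pt by blast
      define i where "i = nat \<lfloor>t * N\<rfloor>"
      have ile: "real i \<le> t * N" unfolding i_def using jt Npos by simp
      moreover have "real i > t * N - 1" unfolding i_def using jt Npos by linarith
      ultimately have "0 \<le> t*N - real i" "t*N - real i \<le> 1" by linarith+
      moreover have "t - real i / N = (t*N - real i) / N" using Npos by (simp add: field_simps)
      ultimately have "\<bar>t - real i / N\<bar> \<le> 1 / N" using Npos by (simp add: divide_right_mono)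
      also have "\<dots> \<le> e" using N1 e Npos by (simp add: field_simps)
      finally have ti: "\<bar>t - real i / N\<bar> \<le> e" .
      have "t * real N \<le> 1 * real N" using jt Npos by (intro mult_right_mono) auto
      hence "real i \<le> real N" using ile by linarith
      hence iN: "i \<le> N" by simp
      have "x - c (j,i) = of_real (t - real i / N) * w j" unfolding c_def using jt by (simp add: algebra_simps)
      hence "norm (x - c (j,i)) = norm (of_real (t - real i / N) :: complex)" by (simp only: norm_mult w_def norm_cis mult_1_right)
      hence "norm (x - c (j,i)) \<le> e" using ti by (simp only: norm_of_real)
      hence "dist (c (j,i)) y < 2*e" using x(2) norm_triangle_ineq[of "c (j,i) - x" "x - y"]
        by (simp add: dist_norm norm_minus_commute)
      moreover have "(j,i) \<in> I" unfolding I_def using jt iN by simp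
      ultimately show "y \<in> (\<Union>a\<in>I. ball (c a) (2*e))" by auto
    qed
    have opn: "open (nbhd (curlicue u) e)"
    proof -
      have "nbhd (curlicue u) e = (\<Union>x\<in>curlicue u. ball x e)" unfolding nbhd_def by (auto simp: dist_norm)
      thus ?thesis by (simp add: open_UN)
    qed
    have fm: "(\<Union>a\<in>I. ball (c a) (2*e)) \<in> fmeasurable lborel"
    proof (rule fmeasurableI)
      show "(\<Union>a\<in>I. ball (c a) (2*e)) \<in> sets lborel" by (simp add: borel_open)
      show "emeasure lborel (\<Union>a\<in>I. ball (c a) (2*e)) < \<infinity>"
        by (rule emeasure_bounded_finite) (simp add: finI bounded_UN)
    qed
    have "measure lborel (nbhd (curlicue u) e) \<le> measure lborel (\<Union>a\<in>I. ball (c a) (2*e))"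
      by (rule measure_mono_fmeasurable[OF sub _ fm]) (simp add: borel_open opn)
    also have "\<dots> \<le> (\<Sum>a\<in>I. measure lborel (ball (c a) (2*e)))"
      by (rule measure_UNION_le[OF finI]) simp
    also have "\<dots> = real (card I) * (pi * (2*e)^2)"
    proof -
      have "measure lborel (ball (c a) (2*e)) = pi * (2*e)^2" for a
        using content_ball[where 'a=complex and c="c a" and r="2*e"] e by (simp add: unit_ball_vol_2)
      thus ?thesis by simp
    qed
    also have "\<dots> = real q * (real N + 1) * (4*pi*e^2)" unfolding cardI by (simp add: power2_eq_square algebra_simps)
    also have "\<dots> \<le> real q * (1/e + 2) * (4*pi*e^2)"
      using N2 by (intro mult_right_mono mult_left_mono) auto
    also have "\<dots> = real q * 4 * pi * (e + 2*e^2)" using e by (simp add: field_simps power2_eq_square)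
    also have "\<dots> \<le> real q * 4 * pi * (3*e)" using e
      by (intro mult_left_mono) (auto simp: power2_eq_square)
    finally show ?thesis using e unfolding K_def by (simp add: field_simps)
  qed
  show "\<not> filterlim (\<lambda>\<epsilon>. measure lborel (nbhd (curlicue u) \<epsilon>) / \<epsilon>) at_top (at_right 0)"
  proof
    assume "filterlim (\<lambda>\<epsilon>. measure lborel (nbhd (curlicue u) \<epsilon>) / \<epsilon>) at_top (at_right 0)"
    hence "eventually (\<lambda>\<epsilon>. measure lborel (nbhd (curlicue u) \<epsilon>) / \<epsilon> \<ge> K + 1) (at_right (0::real))"
      by (simp add: filterlim_at_top)
    moreover have "eventually (\<lambda>\<epsilon>::real. 0 < \<epsilon> \<and> \<epsilon> < 1) (at_right 0)"
      by (simp add: eventually_at_right_field) (rule exI[of _ 1], auto)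
    ultimately have "eventually (\<lambda>\<epsilon>::real. False) (at_right 0)"
      by eventually_elim (use key in force)
    thus False by (simp add: trivial_limit_at_right_real)
  qed
qed

lemma rot_lift:
  fixes \<Phi> :: "real \<Rightarrow> real"
  assumes cont: "continuous_on UNIV \<Phi>" and eq: "\<And>x. cis (2*pi*\<Phi> x) = cis (2*pi*(x+\<rho>))"
  shows "\<exists>c. (\<forall>x. \<Phi> x = x + c) \<and> c - \<rho> \<in> \<int>"
proof -
  define f where "f x = \<Phi> x - (x + \<rho>)" for x
  have fi: "f x \<in> \<int>" for x unfolding f_def using cis_eq_Ints[OF eq[of x]] .
  have fc: "continuous_on UNIV f" unfolding f_def
    by (intro continuous_intros cont)
  have "f x = f 0" for x using cont_Ints_const[OF fc fi] .
  hence "\<forall>x. \<Phi> x = x + \<Phi> 0" unfolding f_def by (metis add.commute diff_add_cancel add_diff_cancel_left' diff_diff_eq2 add_0)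
  moreover have "\<Phi> 0 - \<rho> \<in> \<int>" using fi[of 0] unfolding f_def by simp
  ultimately show ?thesis by blast
qed

lemma transl_pow: "(\<forall>x. \<Phi> x = x + c) \<Longrightarrow> (\<Phi> ^^ n) x = x + real n * c"
  by (induction n) (auto simp: algebra_simps)

lemma geo_zero:
  fixes p :: int and q :: nat
  assumes q2: "q \<ge> 2" and cop: "coprime p (int q)" and c: "c - p/q \<in> \<int>"
  shows "(\<Sum>k<q. cis (2*pi*(x0 + real k * c))) = 0"
proof -
  define w where "w k = cis (2*pi*(x0 + real k * c))" for k
  define \<omega> where "\<omega> = cis (2*pi*c)"
  have ws: "w (Suc k) = \<omega> * w k" for k unfolding w_def \<omega>_def by (simp add: cis_mult algebra_simps)
  have qc: "real q * c \<in> \<int>"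
  proof -
    have "real q * c = p + real q * (c - p/q)" using q2 by (simp add: field_simps)
    thus ?thesis using c by (metis Ints_add Ints_mult Ints_of_int Ints_of_nat)
  qed
  have wq: "w q = w 0" unfolding w_def using qc
    by (metis cis_mult cis_multiple_2pi distrib_left mult.assoc mult.right_neutral of_nat_0 mult_zero_left add_0_right)
  define S where "S = (\<Sum>k<q. w k)"
  have "(\<Sum>k<Suc q. w k) = w 0 + (\<Sum>k<q. w (Suc k))" by (rule sum.lessThan_Suc_shift)
  also have "\<dots> = w 0 + \<omega> * S" unfolding S_def ws by (simp add: sum_distrib_left)
  finally have "S + w q = w 0 + \<omega> * S" unfolding S_def by simp
  hence "(\<omega> - 1) * S = 0" using wq by (simp add: algebra_simps)
  moreover have "\<omega> \<noteq> 1"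
  proof
    assume "\<omega> = 1"
    hence "cis (2*pi*c) = cis (2*pi*0)" unfolding \<omega>_def by simp
    hence "c \<in> \<int>" using cis_eq_Ints by fastforce
    hence "c - (c - p/q) \<in> \<int>" using c by (simp add: Ints_diff)
    then obtain k where k: "real_of_int p / real q = of_int k" by (auto elim: Ints_cases)
    hence "p = k * int q" using q2 by (simp add: field_simps) (metis of_int_eq_iff of_int_mult of_int_of_nat_eq)
    hence "int q dvd p" by simp
    hence "is_unit (int q)" using cop by (metis coprime_absorb_left coprime_commute)
    thus False using q2 by simp
  qed
  ultimately have "S = 0" by simp
  thus ?thesis unfolding S_def w_def .
qed

theorem proposition2p9:
  fixes \<phi> :: "complex \<Rightarrow> complex" and \<Phi> :: "real \<Rightarrow> real"
    and p :: int and q :: nat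
  assumes homeo: "circle_homeo \<phi>" and orient: "orient_pres \<phi>"
    and lift: "is_lift \<Phi> \<phi>"
    and cop: "coprime p (int q)" and q1: "q \<ge> 1"
    and rotnum: "rotation_number \<Phi> = real_of_int p / real q"
    and conj: "\<exists>h h'. homeomorphism S1 S1 h h' \<and> orient_pres h \<and>
                 (\<forall>z\<in>S1. \<phi> z = h' (rot (real_of_int p / real q) (h z)))"
  shows "(\<forall>x0. \<not> superficial (orbit \<Phi> x0))
    \<and> (\<forall>x0.
         ((1 / of_nat q) * (\<Sum>k<q. cis (2 * pi * (\<Phi> ^^ k) x0)) = 0
            \<longleftrightarrow> bounded (curlicue (orbit \<Phi> x0)))
       \<and> (bounded (curlicue (orbit \<Phi> x0))
            \<longleftrightarrow> zpt (orbit \<Phi> x0) q = zpt (orbit \<Phi> x0) 0))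
    \<and> (q \<ge> 2 \<longrightarrow>
         ((\<forall>x0. regular_polygon (orbit \<Phi> x0))
            \<longleftrightarrow> (\<forall>z\<in>S1. \<phi> z = rot (real_of_int p / real q) z)))
    \<and> ((\<forall>z\<in>S1. \<phi> z = rot (real_of_int p / real q) z) \<longrightarrow>
         (\<forall>x0\<in>\<int>. \<forall>n. Im (zpt (orbit \<Phi> x0) (n * q)) = 0
                     \<and> Im (zpt (orbit \<Phi> x0) (n * q + 1)) = 0))"
proof -
  define \<rho> where "\<rho> = real_of_int p / real q"
  have qp: "real q > 0" using q1 by simp
  from lift obtain G where hG: "homeomorphism UNIV UNIV \<Phi> G"
    and liftper: "\<And>x. \<Phi> (x + 1) = \<Phi> x + 1"
    and lifteq: "\<And>x. \<phi> (cis (2 * pi * x)) = cis (2 * pi * \<Phi> x)"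
    unfolding is_lift_def by blast
  have cont: "continuous_on UNIV \<Phi>" using hG by (simp add: homeomorphism_def)
  from conj obtain h h' where hh: "homeomorphism S1 S1 h h'"
    and phieq: "\<And>z. z \<in> S1 \<Longrightarrow> \<phi> z = h' (rot \<rho> (h z))"
    unfolding \<rho>_def by blast
  have hS: "z \<in> S1 \<Longrightarrow> h z \<in> S1" for z using hh by (auto simp: homeomorphism_def)
  have h'S: "z \<in> S1 \<Longrightarrow> h' z \<in> S1" for z using hh by (auto simp: homeomorphism_def)
  have hinv: "z \<in> S1 \<Longrightarrow> h' (h z) = z" for z using hh by (auto simp: homeomorphism_def)
  have h'inv: "z \<in> S1 \<Longrightarrow> h (h' z) = z" for z using hh by (auto simp: homeomorphism_def)
  have rotS: "z \<in> S1 \<Longrightarrow> rot a z \<in> S1" for a z by (simp add: rot_def norm_mult)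
  have rotrot: "rot a (rot b z) = rot (a + b) z" for a b z
    by (simp add: rot_def cis_mult distrib_left)
  have cisS: "cis t \<in> S1" for t by simp
  have iter: "cis (2*pi*(\<Phi>^^k) x) = h' (rot (real k * \<rho>) (h (cis (2*pi*x))))" for k x
  proof (induction k)
    case 0
    show ?case using hinv[OF cisS] by (simp add: rot_def)
  next
    case (Suc k)
    define y where "y = h' (rot (real k * \<rho>) (h (cis (2*pi*x))))"
    have yS: "y \<in> S1" unfolding y_def by (intro h'S rotS hS cisS)
    have "cis (2*pi*(\<Phi>^^Suc k) x) = \<phi> (cis (2*pi*(\<Phi>^^k) x))" by (simp add: lifteq)
    also have "\<dots> = \<phi> y" using Suc y_def by simp
    also have "\<dots> = h' (rot \<rho> (h y))" using phieq[OF yS] .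
    also have "\<dots> = h' (rot (real (Suc k) * \<rho>) (h (cis (2*pi*x))))"
      unfolding y_def using h'inv[OF rotS[OF hS[OF cisS]]] rotrot by (simp add: algebra_simps)
    finally show ?case .
  qed
  have rotp: "rot (real q * \<rho>) z = z" for z
    using qp by (simp add: rot_def \<rho>_def)
  have qint: "(\<Phi>^^q) x - x \<in> \<int>" for x
  proof -
    have "cis (2*pi*(\<Phi>^^q) x) = cis (2*pi*x)" using iter[of q x] rotp hinv[OF cisS] by simp
    thus ?thesis by (rule cis_eq_Ints)
  qed
  define r where "r = (\<Phi>^^q) 0"
  have rint: "r \<in> \<int>" using qint[of 0] unfolding r_def by simp
  have qr: "(\<Phi>^^q) x = x + r" for x
  proof -
    have "continuous_on UNIV (\<lambda>x. (\<Phi>^^q) x - x)"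
      by (intro continuous_intros funpow_cont cont)
    from cont_Ints_const[OF this qint, of x 0] show ?thesis unfolding r_def by simp
  qed
  have per: "cis (2*pi* orbit \<Phi> x0 (k+q)) = cis (2*pi* orbit \<Phi> x0 k)" for x0 k
  proof -
    have "orbit \<Phi> x0 (k+q) = orbit \<Phi> x0 k + r"
      unfolding orbit_def by (simp add: funpow_add qr add.commute[of k q])
    thus ?thesis using rint by (simp add: distrib_left cis_mult[symmetric])
  qed
  have zq0: "zpt (orbit \<Phi> x0) 0 = 0" for x0 by (simp add: zpt_def)
  have bnd_iff: "bounded (curlicue (orbit \<Phi> x0)) \<longleftrightarrow> zpt (orbit \<Phi> x0) q = 0" for x0
    using bounded_case[of "orbit \<Phi> x0" q, OF per[of x0] q1] unbounded_case[of "orbit \<Phi> x0" q, OF per[of x0] q1] by blast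
  have part1: "\<not> superficial (orbit \<Phi> x0)" for x0
  proof (cases "zpt (orbit \<Phi> x0) q = 0")
    case True
    then show ?thesis using bounded_case[of "orbit \<Phi> x0" q, OF per[of x0] q1 True] unfolding superficial_def by simp
  next
    case False
    then show ?thesis using unbounded_case[of "orbit \<Phi> x0" q, OF per[of x0] q1 False] unfolding superficial_def by simp
  qed
  have part2: "((1 / of_nat q) * (\<Sum>k<q. cis (2 * pi * (\<Phi> ^^ k) x0)) = 0
            \<longleftrightarrow> bounded (curlicue (orbit \<Phi> x0)))
       \<and> (bounded (curlicue (orbit \<Phi> x0))
            \<longleftrightarrow> zpt (orbit \<Phi> x0) q = zpt (orbit \<Phi> x0) 0)" for x0
    using bnd_iff[of x0] zq0[of x0] q1 by (simp add: zpt_def orbit_def)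
  have rot_case: "\<exists>c. (\<forall>x. \<Phi> x = x + c) \<and> c - \<rho> \<in> \<int>" if R: "\<forall>z\<in>S1. \<phi> z = rot \<rho> z"
  proof (rule rot_lift[OF cont])
    fix x
    have "cis (2*pi*\<Phi> x) = rot \<rho> (cis (2*pi*x))" using lifteq[of x] R cisS by metis
    thus "cis (2*pi*\<Phi> x) = cis (2*pi*(x+\<rho>))" by (simp add: rot_def cis_mult distrib_left add.commute)
  qed
  have part3: "(\<forall>x0. regular_polygon (orbit \<Phi> x0)) \<longleftrightarrow> (\<forall>z\<in>S1. \<phi> z = rot \<rho> z)" if q2: "q \<ge> 2"
  proof
    assume R: "\<forall>z\<in>S1. \<phi> z = rot \<rho> z"
    then obtain c where c: "\<forall>x. \<Phi> x = x + c" "c - \<rho> \<in> \<int>" using rot_case by blast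
    show "\<forall>x0. regular_polygon (orbit \<Phi> x0)"
    proof
      fix x0
      have u: "orbit \<Phi> x0 k = x0 + real k * c" for k unfolding orbit_def using transl_pow[OF c(1)] .
      have "zpt (orbit \<Phi> x0) q = 0" unfolding zpt_def u
        using geo_zero[OF q2 cop] c(2) unfolding \<rho>_def by simp
      moreover have "\<forall>n. orbit \<Phi> x0 (Suc n) - orbit \<Phi> x0 n - c \<in> \<int>" using u by (simp add: algebra_simps)
      ultimately show "regular_polygon (orbit \<Phi> x0)" unfolding regular_polygon_def
        using q2 zq0[of x0] by (metis One_nat_def Suc_1 Suc_leD)
    qed
  next
    assume Reg: "\<forall>x0. regular_polygon (orbit \<Phi> x0)"
    define d where "d x = \<Phi> x - x" for x
    have dq: "real q * d x0 \<in> \<int>" for x0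
    proof -
      obtain \<theta> where th: "\<forall>n. orbit \<Phi> x0 (Suc n) - orbit \<Phi> x0 n - \<theta> \<in> \<int>"
        using Reg unfolding regular_polygon_def by blast
      have "(\<Sum>n<q. orbit \<Phi> x0 (Suc n) - orbit \<Phi> x0 n - \<theta>) \<in> \<int>" using th by (intro Ints_sum) auto
      moreover have "(\<Sum>n<q. orbit \<Phi> x0 (Suc n) - orbit \<Phi> x0 n - \<theta>) = orbit \<Phi> x0 q - orbit \<Phi> x0 0 - real q * \<theta>"
        using sum_lessThan_telescope[of "orbit \<Phi> x0" q] by (simp add: sum_subtractf)
      moreover have "orbit \<Phi> x0 q - orbit \<Phi> x0 0 = r" unfolding orbit_def using qr by simp
      ultimately have a: "r - real q * \<theta> \<in> \<int>" by simp
      have b: "d x0 - \<theta> \<in> \<int>" using th[rule_format, of 0] unfolding d_def orbit_def by simp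
      have "real q * d x0 = real q * (d x0 - \<theta>) + (r - (r - real q * \<theta>))" by (simp add: algebra_simps)
      thus ?thesis using a b rint by (metis Ints_add Ints_diff Ints_mult Ints_of_nat)
    qed
    have dc: "continuous_on UNIV (\<lambda>x. real q * d x)" unfolding d_def by (intro continuous_intros cont)
    have "real q * d x = real q * d 0" for x using cont_Ints_const[OF dc dq] .
    hence dd: "d x = d 0" for x using qp by simp
    have dconst: "\<forall>x. \<Phi> x = x + \<Phi> 0"
    proof
      fix x show "\<Phi> x = x + \<Phi> 0" using dd[of x] unfolding d_def by linarith
    qed
    define c where "c = \<Phi> 0"
    have "(\<lambda>n. (\<Phi>^^n) 0 / real n) \<longlonglongrightarrow> c"
    proof (rule Lim_transform_eventually[OF tendsto_const])
      show "eventually (\<lambda>n. c = (\<Phi>^^n) 0 / real n) sequentially"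
        using eventually_gt_at_top[of "0::nat"]
      proof (eventually_elim)
        case (elim n)
        have "(\<Phi>^^n) 0 = real n * c" using transl_pow[OF dconst, of n 0] unfolding c_def by simp
        thus ?case using elim by simp
      qed
    qed
    hence "lift_rot \<Phi> = c" unfolding lift_rot_def by (rule limI)
    hence "frac c = \<rho>" using rotnum unfolding rotation_number_def \<rho>_def by simp
    hence "c - \<rho> = of_int \<lfloor>c\<rfloor>" unfolding frac_def by simp
    hence cr: "c - \<rho> \<in> \<int>" by simp
    show "\<forall>z\<in>S1. \<phi> z = rot \<rho> z"
    proof
      fix z :: complex assume zS: "z \<in> S1"
      define x where "x = Arg z / (2*pi)"
      have "z = rcis (cmod z) (Arg z)" by (simp add: rcis_cmod_Arg)
      hence zx: "z = cis (2*pi*x)" using zS unfolding x_def by (simp add: rcis_def)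
      have Px: "\<Phi> x = x + c" using dconst unfolding c_def by (rule spec)
      have "\<phi> z = cis (2*pi*(x + c))" using lifteq[of x] zx by (simp only: Px)
      also have "\<dots> = cis (2*pi*(x + \<rho>)) * cis (2*pi*(c - \<rho>))" by (simp add: cis_mult algebra_simps)
      also have "cis (2*pi*(c - \<rho>)) = 1" using cr by simp
      also have "cis (2*pi*(x + \<rho>)) * 1 = rot \<rho> z" using zx by (simp add: rot_def cis_mult algebra_simps)
      finally show "\<phi> z = rot \<rho> z" .
    qed
  qed
  have part4: "\<forall>x0\<in>\<int>. \<forall>n. Im (zpt (orbit \<Phi> x0) (n * q)) = 0
                     \<and> Im (zpt (orbit \<Phi> x0) (n * q + 1)) = 0" if R: "\<forall>z\<in>S1. \<phi> z = rot \<rho> z"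
  proof (intro ballI allI)
    fix x0 :: real and n :: nat assume x0: "x0 \<in> \<int>"
    obtain c where c: "\<forall>x. \<Phi> x = x + c" "c - \<rho> \<in> \<int>" using rot_case[OF R] by blast
    have u: "orbit \<Phi> x0 k = x0 + real k * c" for k unfolding orbit_def using transl_pow[OF c(1)] .
    have qc: "real q * c \<in> \<int>"
    proof -
      have "real q * c = p + real q * (c - \<rho>)" using qp by (simp add: field_simps \<rho>_def)
      thus ?thesis using c by (metis Ints_add Ints_mult Ints_of_int Ints_of_nat)
    qed
    have ImZ: "Im (zpt (orbit \<Phi> x0) q) = 0"
    proof (cases "q \<ge> 2")
      case True
      have "zpt (orbit \<Phi> x0) q = 0" unfolding zpt_def u
        using geo_zero[OF True cop] c(2) unfolding \<rho>_def by simp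
      thus ?thesis by simp
    next
      case False
      hence "q = 1" using q1 by simp
      thus ?thesis using x0 by (simp add: zpt_def u)
    qed
    have zn: "zpt (orbit \<Phi> x0) (n*q) = of_nat n * zpt (orbit \<Phi> x0) q"
      using zpt_mult[of "orbit \<Phi> x0" q n 0] per zq0 by simp
    have A: "Im (zpt (orbit \<Phi> x0) (n * q)) = 0" using zn ImZ by simp
    have "orbit \<Phi> x0 (n*q) = x0 + real n * (real q * c)" using u by (simp add: algebra_simps)
    hence "orbit \<Phi> x0 (n*q) \<in> \<int>" using x0 qc by (metis Ints_add Ints_mult Ints_of_nat)
    hence "cis (2*pi* orbit \<Phi> x0 (n*q)) = 1" by simp
    moreover have "zpt (orbit \<Phi> x0) (n*q+1) = zpt (orbit \<Phi> x0) (n*q) + cis (2*pi* orbit \<Phi> x0 (n*q))"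
      by (simp add: zpt_def)
    ultimately show "Im (zpt (orbit \<Phi> x0) (n * q)) = 0 \<and> Im (zpt (orbit \<Phi> x0) (n * q + 1)) = 0"
      using A by simp
  qed
  show ?thesis using part1 part2 part3 part4 unfolding \<rho>_def by blast
qed

end
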